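(* Let $B$ be a nonzero real vector space, $\lfloor\cdot,\cdot\rfloor$ a symmetric bilinear form on $B$, $q(b):=\tfrac12\lfloor b,b\rfloor$. Let $\rho\colon B\to B$ be a linear surjection such that $\lfloor\rho(b),\rho(c)\rfloor=\lfloor b,-c\rfloor$ for all $b,c\in B$, and let $g$ be a BC--function on $B$. Then $g\circ\rho$ and $g\circ(-\rho)$ are TBC--functions, $\rho\,\mathrm{dom}\,(g\circ\rho)=\mathrm{dom}\,g$, $\rho\,{\cal N}_q(g\circ\rho)={\cal P}_q(g)$, $-\rho\,\mathrm{dom}\,(g\circ(-\rho))=\mathrm{dom}\,g$ and $-\rho\,{\cal N}_q(g\circ(-\rho))={\cal P}_q(g)$.
   Context: For a proper convex $f\colon B\to\,]{-}\infty,\infty]$, $\mathrm{dom}\,f:=\{b\colon f(b)\in\mathbb{R}\}$ and $f^@(c):=\sup_{b\in B}[\lfloor b,c\rfloor-f(b)]$. A BC--function is a proper convex $f$ with $f^@(b)\ge f(b)\ge q(b)$ for all $b$; a TBC--function is a proper convex $g$ with $g^@(-b)\ge g(b)\ge -q(b)$ for all $b$. For $h\ge q$, ${\cal P}_q(h):=\{b\colon h(b)=q(b)\}$; for $h\ge -q$, ${\cal N}_q(h):=\{b\colon h(b)=-q(b)\}$. *)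

theory Defs
  imports "HOL-Analysis.Analysis"
begin

text \<open>Functions B \<rightarrow> ]-\<infinity>,\<infinity>] are modelled as ereal-valued functions never taking -\<infinity>.
  The bilinear form is a parameter bf.\<close>

definition qf :: "('a \<Rightarrow> 'a \<Rightarrow> real) \<Rightarrow> 'a \<Rightarrow> real" where
  "qf bf b = bf b b / 2"

definition efdom :: "('a \<Rightarrow> ereal) \<Rightarrow> 'a set" where
  "efdom f = {b. \<exists>r. f b = ereal r}"

definition proper_fun :: "('a \<Rightarrow> ereal) \<Rightarrow> bool" where
  "proper_fun f \<longleftrightarrow> (\<forall>b. f b \<noteq> -\<infinity>) \<and> efdom f \<noteq> {}"

definition convex_efun :: "('a::real_vector \<Rightarrow> ereal) \<Rightarrow> bool" where
  "convex_efun f \<longleftrightarrow> (\<forall>x y t. 0 < t \<and> t < 1 \<longrightarrow>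
      f (t *\<^sub>R x + (1 - t) *\<^sub>R y) \<le> ereal t * f x + ereal (1 - t) * f y)"

definition fconj :: "('a \<Rightarrow> 'a \<Rightarrow> real) \<Rightarrow> ('a \<Rightarrow> ereal) \<Rightarrow> 'a \<Rightarrow> ereal" where
  "fconj bf f c = (SUP b. ereal (bf b c) - f b)"

definition BC_fun :: "('a::real_vector \<Rightarrow> 'a \<Rightarrow> real) \<Rightarrow> ('a \<Rightarrow> ereal) \<Rightarrow> bool" where
  "BC_fun bf f \<longleftrightarrow> proper_fun f \<and> convex_efun f \<and>
     (\<forall>b. fconj bf f b \<ge> f b \<and> f b \<ge> ereal (qf bf b))"

definition TBC_fun :: "('a::real_vector \<Rightarrow> 'a \<Rightarrow> real) \<Rightarrow> ('a \<Rightarrow> ereal) \<Rightarrow> bool" where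
  "TBC_fun bf g \<longleftrightarrow> proper_fun g \<and> convex_efun g \<and>
     (\<forall>b. fconj bf g (-b) \<ge> g b \<and> g b \<ge> ereal (- qf bf b))"

definition Pq :: "('a \<Rightarrow> 'a \<Rightarrow> real) \<Rightarrow> ('a \<Rightarrow> ereal) \<Rightarrow> 'a set" where
  "Pq bf h = {b. h b = ereal (qf bf b)}"

definition Nq :: "('a \<Rightarrow> 'a \<Rightarrow> real) \<Rightarrow> ('a \<Rightarrow> ereal) \<Rightarrow> 'a set" where
  "Nq bf h = {b. h b = ereal (- qf bf b)}"

end

theory Submission
  imports Defs
begin

lemma gen:
  fixes bf :: "'a::real_vector \<Rightarrow> 'a \<Rightarrow> real"
    and \<rho> :: "'a \<Rightarrow> 'a"
    and g :: "'a \<Rightarrow> ereal"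
  assumes bil: "bilinear bf"
    and lin: "linear \<rho>"
    and sur: "surj \<rho>"
    and rho_bf: "\<And>b c. bf (\<rho> b) (\<rho> c) = bf b (- c)"
    and BC: "BC_fun bf g"
  shows "TBC_fun bf (g \<circ> \<rho>) \<and> \<rho> ` efdom (g \<circ> \<rho>) = efdom g
    \<and> \<rho> ` Nq bf (g \<circ> \<rho>) = Pq bf g"
proof -
  have lr: "linear (\<lambda>c. bf b c)" for b using bil unfolding bilinear_def by blast
  have q: "qf bf (\<rho> b) = - qf bf b" for b
    using rho_bf[of b b] linear_neg[OF lr[of b]] by (simp add: qf_def)
  have pr: "\<forall>b. g b \<noteq> -\<infinity>" "efdom g \<noteq> {}" and cv: "convex_efun g"
    and ineq: "\<And>b. fconj bf g b \<ge> g b \<and> g b \<ge> ereal (qf bf b)"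
    using BC unfolding BC_fun_def proper_fun_def by auto
  have img: "\<rho> ` {b. P (\<rho> b)} = {x. P x}" for P
  proof
    show "\<rho> ` {b. P (\<rho> b)} \<subseteq> {x. P x}" by blast
    show "{x. P x} \<subseteq> \<rho> ` {b. P (\<rho> b)}"
    proof
      fix x assume "x \<in> {x. P x}"
      moreover obtain y where "x = \<rho> y" using sur by (metis surjD)
      ultimately show "x \<in> \<rho> ` {b. P (\<rho> b)}" by blast
    qed
  qed
  have d1: "\<rho> ` efdom (g \<circ> \<rho>) = efdom g"
    unfolding efdom_def o_def using img[of "\<lambda>x. \<exists>r. g x = ereal r"] by simp
  have d2: "\<rho> ` Nq bf (g \<circ> \<rho>) = Pq bf g"
    unfolding Nq_def Pq_def o_def using img[of "\<lambda>x. g x = ereal (qf bf x)"]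
    by (simp add: q)
  have "proper_fun (g \<circ> \<rho>)"
    unfolding proper_fun_def using pr d1 by auto
  moreover have "convex_efun (g \<circ> \<rho>)"
    unfolding convex_efun_def o_def
  proof (intro allI impI)
    fix x y and t :: real assume t: "0 < t \<and> t < 1"
    have "\<rho> (t *\<^sub>R x + (1 - t) *\<^sub>R y) = t *\<^sub>R \<rho> x + (1 - t) *\<^sub>R \<rho> y"
      by (simp only: linear_add[OF lin] linear_scale[OF lin])
    then show "g (\<rho> (t *\<^sub>R x + (1 - t) *\<^sub>R y)) \<le> ereal t * g (\<rho> x) + ereal (1 - t) * g (\<rho> y)"
      using cv t unfolding convex_efun_def by presburger
  qed
  moreover have "fconj bf (g \<circ> \<rho>) (-b) \<ge> (g \<circ> \<rho>) b \<and> (g \<circ> \<rho>) b \<ge> ereal (- qf bf b)" for b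
  proof
    have "fconj bf (g \<circ> \<rho>) (-b) = (SUP c. ereal (bf (\<rho> c) (\<rho> b)) - g (\<rho> c))"
      unfolding fconj_def o_def by (simp add: rho_bf)
    also have "\<dots> = (SUP d\<in>range \<rho>. ereal (bf d (\<rho> b)) - g d)"
      by (simp add: image_image)
    also have "\<dots> = fconj bf g (\<rho> b)" unfolding fconj_def using sur by simp
    finally show "fconj bf (g \<circ> \<rho>) (-b) \<ge> (g \<circ> \<rho>) b" using ineq[of "\<rho> b"] by simp
    show "(g \<circ> \<rho>) b \<ge> ereal (- qf bf b)" using ineq[of "\<rho> b"] q[of b] by simp
  qed
  ultimately show ?thesis using d1 d2 unfolding TBC_fun_def by blast
qed

theorem lemma3p14:
  fixes bf :: "'a::real_vector \<Rightarrow> 'a \<Rightarrow> real"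
    and \<rho> :: "'a \<Rightarrow> 'a"
    and g :: "'a \<Rightarrow> ereal"
  assumes nonzero: "\<exists>b::'a. b \<noteq> 0"
    and bil: "bilinear bf"
    and sym: "\<And>b c. bf b c = bf c b"
    and lin: "linear \<rho>"
    and sur: "surj \<rho>"
    and rho_bf: "\<And>b c. bf (\<rho> b) (\<rho> c) = bf b (- c)"
    and BC: "BC_fun bf g"
  shows "TBC_fun bf (g \<circ> \<rho>) \<and> TBC_fun bf (g \<circ> (\<lambda>b. - \<rho> b))
    \<and> \<rho> ` efdom (g \<circ> \<rho>) = efdom g
    \<and> \<rho> ` Nq bf (g \<circ> \<rho>) = Pq bf g
    \<and> (\<lambda>b. - \<rho> b) ` efdom (g \<circ> (\<lambda>b. - \<rho> b)) = efdom g
    \<and> (\<lambda>b. - \<rho> b) ` Nq bf (g \<circ> (\<lambda>b. - \<rho> b)) = Pq bf g"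
proof -
  have l2: "linear (\<lambda>b. - \<rho> b)" using lin by (simp add: linear_compose_neg)
  have s2: "surj (\<lambda>b. - \<rho> b)"
  proof (rule surjI)
    fix x show "- \<rho> (inv \<rho> (- x)) = x" using surj_f_inv_f[OF sur, of "-x"] by simp
  qed
  have lr: "linear (\<lambda>c. bf b c)" for b using bil unfolding bilinear_def by blast
  have ll: "linear (\<lambda>c. bf c b)" for b using bil unfolding bilinear_def by blast
  have r2: "bf (- \<rho> b) (- \<rho> c) = bf b (- c)" for b c
    using rho_bf[of b c] linear_neg[OF lr] linear_neg[OF ll] by simp
  show ?thesis using gen[OF bil lin sur rho_bf BC] gen[OF bil l2 s2 r2 BC] by blast
qed

end
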